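(* Let $\mathcal I$ and $\mathcal J$ be ideals on $\omega$ and let $X$ be a nonempty topological space. The following are equivalent: (1) $\mathcal I\subseteq\mathcal J$; (2) for every sequence $(f_n)$ in $\mathcal C(X)$: if $f_n\to0$ $\mathcal I$-uniformly then $f_n\to0$ $\mathcal J$-$\sigma$-uniformly; (3) for every $(f_n)$ in $\mathcal C(X)$: $\mathcal I$-uniform convergence to $0$ implies $\mathcal J$-quasi-normal convergence to $0$; (4) for every $(f_n)$ in $\mathcal C(X)$: $\mathcal I$-$\sigma$-uniform convergence to $0$ implies $\mathcal J$-quasi-normal convergence to $0$; (5) for every $(f_n)$ in $\mathcal C(X)$: $\mathcal I$-$\sigma$-uniform convergence to $0$ implies $\mathcal J$-pointwise convergence to $0$; (6) for every $(f_n)$ in $\mathcal C(X)$: $\mathcal I$-uniform convergence to $0$ implies $\mathcal J$-pointwise convergence to $0$; (7) for every $(f_n)$ in $\mathcal C(X)$: $\mathcal I$-quasi-normal convergence to $0$ implies $\mathcal J$-pointwise convergence to $0$.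
   Context: An ideal on $\omega$ is a family $\mathcal I\subseteq\mathcal P(\omega)$ closed under finite unions and subsets, containing all finite sets, with $\omega\notin\mathcal I$. A real sequence $(a_n)$ is $\mathcal I$-convergent to $0$ if $\{n:|a_n|\ge\varepsilon\}\in\mathcal I$ for all $\varepsilon>0$. For a sequence $(f_n)$ of real functions on a set $X$: $\mathcal I$-pointwise convergence to $0$ means $(f_n(x))$ is $\mathcal I$-convergent to $0$ for each $x$; $\mathcal I$-uniform means $\{n:\exists x\in X\,(|f_n(x)|\ge\varepsilon)\}\in\mathcal I$ for each $\varepsilon>0$; $\mathcal I$-$\sigma$-uniform means $X=\bigcup_{k\in\omega}X_k$ with $(f_n\restriction X_k)$ $\mathcal I$-uniformly convergent to $0$ for each $k$; $\mathcal I$-quasi-normal means there is a sequence $(\varepsilon_n)$ of positive reals $\mathcal I$-convergent to $0$ with $\{n:|f_n(x)|\ge\varepsilon_n\}\in\mathcal I$ for each $x$. $\mathcal C(X)$ = continuous real functions on $X$. *)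

theory Defs
  imports "HOL-Analysis.Analysis"
begin

definition is_ideal :: "nat set set \<Rightarrow> bool" where
  "is_ideal I \<longleftrightarrow>
     (\<forall>A\<in>I. \<forall>B\<in>I. A \<union> B \<in> I) \<and>
     (\<forall>A\<in>I. \<forall>B. B \<subseteq> A \<longrightarrow> B \<in> I) \<and>
     (\<forall>A. finite A \<longrightarrow> A \<in> I) \<and>
     UNIV \<notin> I"

definition I_conv0 :: "nat set set \<Rightarrow> (nat \<Rightarrow> real) \<Rightarrow> bool" where
  "I_conv0 I a \<longleftrightarrow> (\<forall>\<epsilon>>0. {n. \<bar>a n\<bar> \<ge> \<epsilon>} \<in> I)"

definition I_pointwise0 :: "nat set set \<Rightarrow> 'a set \<Rightarrow> (nat \<Rightarrow> 'a \<Rightarrow> real) \<Rightarrow> bool" where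
  "I_pointwise0 I S f \<longleftrightarrow> (\<forall>x\<in>S. I_conv0 I (\<lambda>n. f n x))"

definition I_uniform0 :: "nat set set \<Rightarrow> 'a set \<Rightarrow> (nat \<Rightarrow> 'a \<Rightarrow> real) \<Rightarrow> bool" where
  "I_uniform0 I S f \<longleftrightarrow> (\<forall>\<epsilon>>0. {n. \<exists>x\<in>S. \<bar>f n x\<bar> \<ge> \<epsilon>} \<in> I)"

definition I_sigma_uniform0 :: "nat set set \<Rightarrow> 'a set \<Rightarrow> (nat \<Rightarrow> 'a \<Rightarrow> real) \<Rightarrow> bool" where
  "I_sigma_uniform0 I S f \<longleftrightarrow>
     (\<exists>Xk :: nat \<Rightarrow> 'a set. S = (\<Union>k. Xk k) \<and> (\<forall>k. I_uniform0 I (Xk k) f))"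

definition I_quasi_normal0 :: "nat set set \<Rightarrow> 'a set \<Rightarrow> (nat \<Rightarrow> 'a \<Rightarrow> real) \<Rightarrow> bool" where
  "I_quasi_normal0 I S f \<longleftrightarrow>
     (\<exists>eps :: nat \<Rightarrow> real. (\<forall>n. eps n > 0) \<and> I_conv0 I eps \<and>
        (\<forall>x\<in>S. {n. \<bar>f n x\<bar> \<ge> eps n} \<in> I))"

definition seq_in_C :: "'a topology \<Rightarrow> (nat \<Rightarrow> 'a \<Rightarrow> real) \<Rightarrow> bool" where
  "seq_in_C X f \<longleftrightarrow> (\<forall>n. continuous_map X euclideanreal (f n))"

end

theory Submission
  imports Defs
begin

lemma ideal_sub: "is_ideal I \<Longrightarrow> A \<in> I \<Longrightarrow> B \<subseteq> A \<Longrightarrow> B \<in> I"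
  unfolding is_ideal_def by blast

lemma ideal_un: "is_ideal I \<Longrightarrow> A \<in> I \<Longrightarrow> B \<in> I \<Longrightarrow> A \<union> B \<in> I"
  unfolding is_ideal_def by blast

lemma ideal_fin: "is_ideal I \<Longrightarrow> finite A \<Longrightarrow> A \<in> I"
  unfolding is_ideal_def by blast

lemma ideal_UN:
  assumes "is_ideal I" "finite K" "\<forall>k\<in>K. A k \<in> I"
  shows "(\<Union>k\<in>K. A k) \<in> I"
  using assms(2,3)
proof (induction K rule: finite_induct)
  case empty then show ?case using ideal_fin[OF assms(1)] by simp
next
  case (insert k K) then show ?case using ideal_un[OF assms(1)] by simp
qed

lemma uniform_mono: "I \<subseteq> J \<Longrightarrow> I_uniform0 I S f \<Longrightarrow> I_uniform0 J S f"
  unfolding I_uniform0_def by blast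

lemma qn_mono: "I \<subseteq> J \<Longrightarrow> I_quasi_normal0 I S f \<Longrightarrow> I_quasi_normal0 J S f"
  unfolding I_quasi_normal0_def I_conv0_def by blast

lemma uniform_sigma: "I_uniform0 I S f \<Longrightarrow> I_sigma_uniform0 I S f"
  unfolding I_sigma_uniform0_def by (rule exI[of _ "\<lambda>k. S"]) simp

lemma qn_pw:
  assumes I: "is_ideal I" and q: "I_quasi_normal0 I S f"
  shows "I_pointwise0 I S f"
proof -
  obtain eps where pos: "\<forall>n. eps n > 0" and c: "I_conv0 I eps"
    and b: "\<forall>x\<in>S. {n. \<bar>f n x\<bar> \<ge> eps n} \<in> I"
    using q unfolding I_quasi_normal0_def by blast
  show ?thesis unfolding I_pointwise0_def I_conv0_def
  proof (intro ballI allI impI)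
    fix x :: 'a and e :: real assume x: "x \<in> S" and e: "e > 0"
    have "{n. \<bar>f n x\<bar> \<ge> e} \<subseteq> {n. \<bar>f n x\<bar> \<ge> eps n} \<union> {n. \<bar>eps n\<bar> \<ge> e}"
      by auto
    moreover have "{n. \<bar>f n x\<bar> \<ge> eps n} \<union> {n. \<bar>eps n\<bar> \<ge> e} \<in> I"
      using ideal_un[OF I] b x c e unfolding I_conv0_def by blast
    ultimately show "{n. \<bar>f n x\<bar> \<ge> e} \<in> I" using ideal_sub[OF I] by blast
  qed
qed

lemma sigma_qn:
  assumes I: "is_ideal I" and s: "I_sigma_uniform0 I S f"
  shows "I_quasi_normal0 I S f"
proof -
  obtain Xk :: "nat \<Rightarrow> 'a set" where S: "S = (\<Union>k. Xk k)" and u: "\<forall>k. I_uniform0 I (Xk k) f"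
    using s unfolding I_sigma_uniform0_def by blast
  define C where "C m = (\<Union>k\<in>{..<m}. {n. \<exists>x\<in>Xk k. \<bar>f n x\<bar> \<ge> 1 / (real m + 1)})" for m
  have CI: "C m \<in> I" for m
    unfolding C_def
    by (rule ideal_UN[OF I]) (use u in \<open>auto simp: I_uniform0_def\<close>)
  define mm where "mm n = (GREATEST m. m \<le> n \<and> n \<notin> C m)" for n
  have C0: "C 0 = {}" unfolding C_def by simp
  have mmP: "mm n \<le> n \<and> n \<notin> C (mm n)" for n
    unfolding mm_def
    by (rule GreatestI_nat[of _ 0 n]) (auto simp: C0)
  have mmG: "m \<le> mm n" if "m \<le> n" "n \<notin> C m" for m n
    unfolding mm_def by (rule Greatest_le_nat[of _ m n]) (use that in auto)
  define eps where "eps n = 1 / (real (mm n) + 1)" for n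
  show ?thesis unfolding I_quasi_normal0_def
  proof (intro exI[of _ eps] conjI ballI allI impI)
    fix n show "eps n > 0" unfolding eps_def by simp
  next
    show "I_conv0 I eps" unfolding I_conv0_def
    proof (intro allI impI)
      fix e :: real assume e: "e > 0"
      obtain M :: nat where M: "1 / (real M + 1) < e"
        using e by (metis add.commute nat_approx_posE of_nat_Suc)
      have "{n. \<bar>eps n\<bar> \<ge> e} \<subseteq> {..<M} \<union> C M"
      proof
        fix n assume "n \<in> {n. \<bar>eps n\<bar> \<ge> e}"
        hence h: "1 / (real (mm n) + 1) \<ge> e" unfolding eps_def by simp
        show "n \<in> {..<M} \<union> C M"
        proof (rule ccontr)
          assume "n \<notin> {..<M} \<union> C M"
          hence "M \<le> mm n" using mmG by auto
          hence "1 / (real (mm n) + 1) \<le> 1 / (real M + 1)"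
            by (simp add: frac_le)
          thus False using h M by linarith
        qed
      qed
      moreover have "{..<M} \<union> C M \<in> I"
        using ideal_un[OF I] ideal_fin[OF I] CI by simp
      ultimately show "{n. \<bar>eps n\<bar> \<ge> e} \<in> I" using ideal_sub[OF I] by blast
    qed
  next
    fix x assume "x \<in> S"
    then obtain k where xk: "x \<in> Xk k" using S by blast
    have "{n. \<bar>f n x\<bar> \<ge> eps n} \<subseteq> {..k} \<union> C (Suc k)"
    proof
      fix n assume "n \<in> {n. \<bar>f n x\<bar> \<ge> eps n}"
      hence h: "\<bar>f n x\<bar> \<ge> 1 / (real (mm n) + 1)" unfolding eps_def by simp
      show "n \<in> {..k} \<union> C (Suc k)"
      proof (rule ccontr)
        assume "n \<notin> {..k} \<union> C (Suc k)"
        hence "Suc k \<le> mm n" using mmG[of "Suc k" n] by auto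
        moreover have "n \<notin> C (mm n)" using mmP by blast
        ultimately show False using h xk unfolding C_def by auto
      qed
    qed
    moreover have "{..k} \<union> C (Suc k) \<in> I"
      using ideal_un[OF I] ideal_fin[OF I] CI by simp
    ultimately show "{n. \<bar>f n x\<bar> \<ge> eps n} \<in> I" using ideal_sub[OF I] by blast
  qed
qed

lemma sigma_pw: "is_ideal I \<Longrightarrow> I_sigma_uniform0 I S f \<Longrightarrow> I_pointwise0 I S f"
  using sigma_qn qn_pw by blast

lemma key:
  assumes I: "is_ideal I" and J: "is_ideal J" and x0: "x0 \<in> topspace X"
    and H: "\<forall>f. seq_in_C X f \<longrightarrow> I_uniform0 I (topspace X) f \<longrightarrow> I_pointwise0 J (topspace X) f"
  shows "I \<subseteq> J"
proof
  fix A assume A: "A \<in> I"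
  define f where "f n x = (if n \<in> A then 1 else 0 :: real)" for n and x :: 'a
  have "seq_in_C X f" unfolding seq_in_C_def f_def by simp
  moreover have "I_uniform0 I (topspace X) f" unfolding I_uniform0_def
  proof (intro allI impI)
    fix e :: real assume "e > 0"
    have "{n. \<exists>x\<in>topspace X. \<bar>f n x\<bar> \<ge> e} \<subseteq> A" unfolding f_def using \<open>e > 0\<close> by auto
    thus "{n. \<exists>x\<in>topspace X. \<bar>f n x\<bar> \<ge> e} \<in> I" using ideal_sub[OF I A] by blast
  qed
  ultimately have "I_pointwise0 J (topspace X) f" using H by blast
  hence "{n. \<bar>f n x0\<bar> \<ge> 1} \<in> J" using x0 unfolding I_pointwise0_def I_conv0_def by simp
  moreover have "{n. \<bar>f n x0\<bar> \<ge> 1} = A" unfolding f_def by auto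
  ultimately show "A \<in> J" by simp
qed

theorem proposition3p2:
  fixes I J :: "nat set set" and X :: "'a topology"
  assumes "is_ideal I" and "is_ideal J" and "topspace X \<noteq> {}"
  shows
   "(I \<subseteq> J \<longleftrightarrow>
      (\<forall>f. seq_in_C X f \<longrightarrow> I_uniform0 I (topspace X) f \<longrightarrow> I_sigma_uniform0 J (topspace X) f))
  \<and> (I \<subseteq> J \<longleftrightarrow>
      (\<forall>f. seq_in_C X f \<longrightarrow> I_uniform0 I (topspace X) f \<longrightarrow> I_quasi_normal0 J (topspace X) f))
  \<and> (I \<subseteq> J \<longleftrightarrow>
      (\<forall>f. seq_in_C X f \<longrightarrow> I_sigma_uniform0 I (topspace X) f \<longrightarrow> I_quasi_normal0 J (topspace X) f))
  \<and> (I \<subseteq> J \<longleftrightarrow>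
      (\<forall>f. seq_in_C X f \<longrightarrow> I_sigma_uniform0 I (topspace X) f \<longrightarrow> I_pointwise0 J (topspace X) f))
  \<and> (I \<subseteq> J \<longleftrightarrow>
      (\<forall>f. seq_in_C X f \<longrightarrow> I_uniform0 I (topspace X) f \<longrightarrow> I_pointwise0 J (topspace X) f))
  \<and> (I \<subseteq> J \<longleftrightarrow>
      (\<forall>f. seq_in_C X f \<longrightarrow> I_quasi_normal0 I (topspace X) f \<longrightarrow> I_pointwise0 J (topspace X) f))"
proof -
  note I = assms(1) and J = assms(2)
  obtain x0 where x0: "x0 \<in> topspace X" using assms(3) by blast
  note K = key[OF I J x0]
  have U2Q: "I_uniform0 I S f \<Longrightarrow> I_quasi_normal0 I S f" for S and f :: "nat \<Rightarrow> 'a \<Rightarrow> real"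
    using sigma_qn[OF I] uniform_sigma by blast
  show ?thesis
  proof (intro conjI iffI allI impI)
    fix f :: "nat \<Rightarrow> 'a \<Rightarrow> real"
    assume "I \<subseteq> J" "I_uniform0 I (topspace X) f"
    thus "I_sigma_uniform0 J (topspace X) f" using uniform_mono uniform_sigma by blast
  next
    assume "\<forall>f. seq_in_C X f \<longrightarrow> I_uniform0 I (topspace X) f \<longrightarrow> I_sigma_uniform0 J (topspace X) f"
    thus "I \<subseteq> J" using K sigma_pw[OF J] by blast
  next
    fix f :: "nat \<Rightarrow> 'a \<Rightarrow> real"
    assume "I \<subseteq> J" "I_uniform0 I (topspace X) f"
    thus "I_quasi_normal0 J (topspace X) f" using U2Q qn_mono by blast
  next
    assume "\<forall>f. seq_in_C X f \<longrightarrow> I_uniform0 I (topspace X) f \<longrightarrow> I_quasi_normal0 J (topspace X) f"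
    thus "I \<subseteq> J" using K qn_pw[OF J] by blast
  next
    fix f :: "nat \<Rightarrow> 'a \<Rightarrow> real"
    assume "I \<subseteq> J" "I_sigma_uniform0 I (topspace X) f"
    thus "I_quasi_normal0 J (topspace X) f" using sigma_qn[OF I] qn_mono by blast
  next
    assume "\<forall>f. seq_in_C X f \<longrightarrow> I_sigma_uniform0 I (topspace X) f \<longrightarrow> I_quasi_normal0 J (topspace X) f"
    thus "I \<subseteq> J" using K qn_pw[OF J] uniform_sigma by blast
  next
    fix f :: "nat \<Rightarrow> 'a \<Rightarrow> real"
    assume "I \<subseteq> J" "I_sigma_uniform0 I (topspace X) f"
    thus "I_pointwise0 J (topspace X) f" using sigma_qn[OF I] qn_mono qn_pw[OF J] by blast
  next
    assume "\<forall>f. seq_in_C X f \<longrightarrow> I_sigma_uniform0 I (topspace X) f \<longrightarrow> I_pointwise0 J (topspace X) f"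
    thus "I \<subseteq> J" using K uniform_sigma by blast
  next
    fix f :: "nat \<Rightarrow> 'a \<Rightarrow> real"
    assume "I \<subseteq> J" "I_uniform0 I (topspace X) f"
    thus "I_pointwise0 J (topspace X) f" using U2Q qn_mono qn_pw[OF J] by blast
  next
    assume "\<forall>f. seq_in_C X f \<longrightarrow> I_uniform0 I (topspace X) f \<longrightarrow> I_pointwise0 J (topspace X) f"
    thus "I \<subseteq> J" using K by blast
  next
    fix f :: "nat \<Rightarrow> 'a \<Rightarrow> real"
    assume "I \<subseteq> J" "I_quasi_normal0 I (topspace X) f"
    thus "I_pointwise0 J (topspace X) f" using qn_mono qn_pw[OF J] by blast
  next
    assume "\<forall>f. seq_in_C X f \<longrightarrow> I_quasi_normal0 I (topspace X) f \<longrightarrow> I_pointwise0 J (topspace X) f"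
    thus "I \<subseteq> J" using K U2Q by blast
  qed
qed

end
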